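(* Let $c_v>\frac12$ and let $\varrho_\pm,p_\pm>0$, $v_\pm\in\mathbb{R}$ be Riemann data for the one-dimensional full Euler system whose 1D Riemann solution consists of a 1-shock, possibly a 2-contact discontinuity, and a 3-shock, with intermediate states $(\varrho_{M-},v_M,p_M)$, $(\varrho_{M+},v_M,p_M)$, and assume $v_M=0$. Let $\varepsilon_{\max}>0$ and functions $\mu_0,\mu_1,\mu_2:(0,\varepsilon_{\max}]\to\mathbb{R}$ be as described in the context (so that $\mu_0(\varepsilon)<\mu_1(\varepsilon)<\mu_2(\varepsilon)$). For $(\varepsilon,\delta)\in(0,\varepsilon_{\max}]\times(0,p_M)$ define $C_1(\varepsilon,\delta)=\frac{2}{(\varrho_{M-}+\varepsilon)(\mu_0-\mu_1)}\Big[-\mu_0\big(c_v(p_M-\delta-p_-)-\tfrac12\varrho_-v_-^2\big)+\mu_1(c_v+1)(p_M-\delta)-\big(\tfrac12\varrho_-v_-^2+(c_v+1)p_-\big)v_-\Big]$, $C_2(\varepsilon,\delta)=\frac{2}{(\varrho_{M+}-\varepsilon)(\mu_2-\mu_1)}\Big[-\mu_2\big(c_v(p_M-\delta-p_+)-\tfrac12\varrho_+v_+^2\big)+\mu_1(c_v+1)(p_M-\delta)-\big(\tfrac12\varrho_+v_+^2+(c_v+1)p_+\big)v_+\Big]$, $\gamma_1(\varepsilon,\delta)=\frac{1}{\varrho_{M-}+\varepsilon}\Big[(\varrho_{M-}+\varepsilon)\frac{C_1}{2}-\varrho_-v_-^2+p_M-\delta-p_--\mu_0\big((\varrho_{M-}+\varepsilon)\mu_1-\varrho_-v_-\big)\Big]$,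 $\gamma_2(\varepsilon,\delta)=\frac{1}{\varrho_{M+}-\varepsilon}\Big[(\varrho_{M+}-\varepsilon)\frac{C_2}{2}-\varrho_+v_+^2+p_M-\delta-p_+-\mu_2\big((\varrho_{M+}-\varepsilon)\mu_1-\varrho_+v_+\big)\Big]$, where $\mu_i=\mu_i(\varepsilon)$ and $C_i=C_i(\varepsilon,\delta)$. Then $\lim_{(\varepsilon,\delta)\to0}C_1(\varepsilon,\delta)=\lim_{(\varepsilon,\delta)\to0}C_2(\varepsilon,\delta)=v_M^2$ and $\lim_{(\varepsilon,\delta)\to0}\gamma_1(\varepsilon,\delta)=\lim_{(\varepsilon,\delta)\to0}\gamma_2(\varepsilon,\delta)=-\frac{v_M^2}{2}$.
   Context: The one-dimensional full Euler system for an ideal gas is $\partial_t\varrho+\partial_2(\varrho v)=0$, $\partial_t(\varrho v)+\partial_2(\varrho v^2+p)=0$, $\partial_t(\frac12\varrho v^2+c_vp)+\partial_2[(\frac12\varrho v^2+(c_v+1)p)v]=0$; its 1D Riemann solution is the unique self-similar BV solution with the given data, consisting of a 1-wave, a possibly absent contact discontinuity and a 3-wave separated by constant states; here both outer waves are admissible shocks with speeds $\sigma_\pm$, and $\varrho_{M\pm}>\varrho_\pm$, $p_M>\max\{p_-,p_+\}$. Define $A(\varepsilon)=\varrho_-(\varrho_{M-}+\varepsilon)(\varrho_{M+}-\varepsilon-\varrho_+)-\varrho_+(\varrho_{M+}-\varepsilon)(\varrho_{M-}+\varepsilon-\varrho_-)$, $B(\varepsilon)=\varrho_-\varrho_+(\varrho_{M-}+\varepsilon)(\varrho_{M+}-\varepsilon)(v_--v_+)^2-(p_--p_+)A(\varepsilon)$,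 $D(\varepsilon)=v_-\varrho_-(\varrho_{M-}+\varepsilon)(\varrho_{M+}-\varepsilon-\varrho_+)-v_+\varrho_+(\varrho_{M+}-\varepsilon)(\varrho_{M-}+\varepsilon-\varrho_-)$. $\varepsilon_{\max}>0$ is such that on $(0,\varepsilon_{\max}]$: $A\neq0$, $B>0$, $\varrho_{M+}-\varepsilon-\varrho_+>0$, $\varrho_{M-}+\varepsilon-\varrho_->0$ and $\mu_0<\mu_1<\mu_2$, where $\mu_0=\frac1A\big[D+\varrho_-\varrho_+(\varrho_{M+}-\varepsilon)(v_--v_+)-\sqrt{(\varrho_{M-}+\varepsilon)^2\frac{\varrho_{M+}-\varepsilon-\varrho_+}{\varrho_{M-}+\varepsilon-\varrho_-}B}\big]$, $\mu_1=\frac1A\big[D-\sqrt{(\varrho_{M-}+\varepsilon-\varrho_-)(\varrho_{M+}-\varepsilon-\varrho_+)B}\big]$, $\mu_2=\frac1A\big[D+\varrho_-\varrho_+(\varrho_{M-}+\varepsilon)(v_--v_+)-\sqrt{(\varrho_{M+}-\varepsilon)^2\frac{\varrho_{M-}+\varepsilon-\varrho_-}{\varrho_{M+}-\varepsilon-\varrho_+}B}\big]$ (all evaluated at $\varepsilon$). The paper shows such $\varepsilon_{\max}$ exists. *)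

theory Defs
  imports "HOL-Analysis.Analysis"
begin

text \<open>Notation: left state (rL,vL,pL) = (rho_-, v_-, p_-), right state (rR,vR,pR) = (rho_+, v_+, p_+),
 intermediate states (rML, vM, pM) and (rMR, vM, pM); cv = c_v.\<close>

definition energy :: "real \<Rightarrow> real \<Rightarrow> real \<Rightarrow> real \<Rightarrow> real" where
  "energy cv r v p = r * v^2 / 2 + cv * p"

definition RH :: "real \<Rightarrow> real \<Rightarrow> real \<Rightarrow> real \<Rightarrow> real \<Rightarrow> real \<Rightarrow> real \<Rightarrow> real \<Rightarrow> bool" where
  "RH cv s r1 v1 p1 r2 v2 p2 \<longleftrightarrow>
     s * (r2 - r1) = r2 * v2 - r1 * v1 \<and>
     s * (r2 * v2 - r1 * v1) = (r2 * v2^2 + p2) - (r1 * v1^2 + p1) \<and>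
     s * (energy cv r2 v2 p2 - energy cv r1 v1 p1)
       = (energy cv r2 v2 p2 + p2) * v2 - (energy cv r1 v1 p1 + p1) * v1"

definition sound_speed :: "real \<Rightarrow> real \<Rightarrow> real \<Rightarrow> real" where
  "sound_speed cv r p = sqrt (((cv + 1) / cv) * p / r)"

definition Afun :: "real \<Rightarrow> real \<Rightarrow> real \<Rightarrow> real \<Rightarrow> real \<Rightarrow> real" where
  "Afun rL rR rML rMR e =
     rL * (rML + e) * (rMR - e - rR) - rR * (rMR - e) * (rML + e - rL)"

definition Bfun :: "real \<Rightarrow> real \<Rightarrow> real \<Rightarrow> real \<Rightarrow> real \<Rightarrow> real \<Rightarrow> real \<Rightarrow> real \<Rightarrow> real \<Rightarrow> real" where
  "Bfun rL vL pL rR vR pR rML rMR e =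
     rL * rR * (rML + e) * (rMR - e) * (vL - vR)^2 - (pL - pR) * Afun rL rR rML rMR e"

definition Dfun :: "real \<Rightarrow> real \<Rightarrow> real \<Rightarrow> real \<Rightarrow> real \<Rightarrow> real \<Rightarrow> real \<Rightarrow> real" where
  "Dfun rL vL rR vR rML rMR e =
     vL * rL * (rML + e) * (rMR - e - rR) - vR * rR * (rMR - e) * (rML + e - rL)"

definition mu0 :: "real \<Rightarrow> real \<Rightarrow> real \<Rightarrow> real \<Rightarrow> real \<Rightarrow> real \<Rightarrow> real \<Rightarrow> real \<Rightarrow> real \<Rightarrow> real" where
  "mu0 rL vL pL rR vR pR rML rMR e =
     (Dfun rL vL rR vR rML rMR e + rL * rR * (rMR - e) * (vL - vR)
      - sqrt ((rML + e)^2 * ((rMR - e - rR) / (rML + e - rL)) * Bfun rL vL pL rR vR pR rML rMR e))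
     / Afun rL rR rML rMR e"

definition mu1 :: "real \<Rightarrow> real \<Rightarrow> real \<Rightarrow> real \<Rightarrow> real \<Rightarrow> real \<Rightarrow> real \<Rightarrow> real \<Rightarrow> real \<Rightarrow> real" where
  "mu1 rL vL pL rR vR pR rML rMR e =
     (Dfun rL vL rR vR rML rMR e
      - sqrt ((rML + e - rL) * (rMR - e - rR) * Bfun rL vL pL rR vR pR rML rMR e))
     / Afun rL rR rML rMR e"

definition mu2 :: "real \<Rightarrow> real \<Rightarrow> real \<Rightarrow> real \<Rightarrow> real \<Rightarrow> real \<Rightarrow> real \<Rightarrow> real \<Rightarrow> real \<Rightarrow> real" where
  "mu2 rL vL pL rR vR pR rML rMR e =
     (Dfun rL vL rR vR rML rMR e + rL * rR * (rML + e) * (vL - vR)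
      - sqrt ((rMR - e)^2 * ((rML + e - rL) / (rMR - e - rR)) * Bfun rL vL pL rR vR pR rML rMR e))
     / Afun rL rR rML rMR e"

definition C1 :: "real \<Rightarrow> real \<Rightarrow> real \<Rightarrow> real \<Rightarrow> real \<Rightarrow> real \<Rightarrow> real \<Rightarrow> real \<Rightarrow> real \<Rightarrow> real \<Rightarrow> real \<Rightarrow> real \<Rightarrow> real" where
  "C1 cv rL vL pL rR vR pR rML rMR pM e d =
     (let m0 = mu0 rL vL pL rR vR pR rML rMR e; m1 = mu1 rL vL pL rR vR pR rML rMR e in
      2 / ((rML + e) * (m0 - m1)) *
       (- m0 * (cv * (pM - d - pL) - rL * vL^2 / 2) + m1 * (cv + 1) * (pM - d)
        - (rL * vL^2 / 2 + (cv + 1) * pL) * vL))"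

definition C2 :: "real \<Rightarrow> real \<Rightarrow> real \<Rightarrow> real \<Rightarrow> real \<Rightarrow> real \<Rightarrow> real \<Rightarrow> real \<Rightarrow> real \<Rightarrow> real \<Rightarrow> real \<Rightarrow> real \<Rightarrow> real" where
  "C2 cv rL vL pL rR vR pR rML rMR pM e d =
     (let m2 = mu2 rL vL pL rR vR pR rML rMR e; m1 = mu1 rL vL pL rR vR pR rML rMR e in
      2 / ((rMR - e) * (m2 - m1)) *
       (- m2 * (cv * (pM - d - pR) - rR * vR^2 / 2) + m1 * (cv + 1) * (pM - d)
        - (rR * vR^2 / 2 + (cv + 1) * pR) * vR))"

definition gamma1 :: "real \<Rightarrow> real \<Rightarrow> real \<Rightarrow> real \<Rightarrow> real \<Rightarrow> real \<Rightarrow> real \<Rightarrow> real \<Rightarrow> real \<Rightarrow> real \<Rightarrow> real \<Rightarrow> real \<Rightarrow> real" where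
  "gamma1 cv rL vL pL rR vR pR rML rMR pM e d =
     (let m0 = mu0 rL vL pL rR vR pR rML rMR e; m1 = mu1 rL vL pL rR vR pR rML rMR e;
          c = C1 cv rL vL pL rR vR pR rML rMR pM e d in
      ((rML + e) * c / 2 - rL * vL^2 + pM - d - pL - m0 * ((rML + e) * m1 - rL * vL)) / (rML + e))"

definition gamma2 :: "real \<Rightarrow> real \<Rightarrow> real \<Rightarrow> real \<Rightarrow> real \<Rightarrow> real \<Rightarrow> real \<Rightarrow> real \<Rightarrow> real \<Rightarrow> real \<Rightarrow> real \<Rightarrow> real \<Rightarrow> real" where
  "gamma2 cv rL vL pL rR vR pR rML rMR pM e d =
     (let m2 = mu2 rL vL pL rR vR pR rML rMR e; m1 = mu1 rL vL pL rR vR pR rML rMR e;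
          c = C2 cv rL vL pL rR vR pR rML rMR pM e d in
      ((rMR - e) * c / 2 - rR * vR^2 + pM - d - pR - m2 * ((rMR - e) * m1 - rR * vR)) / (rMR - e))"

end

theory Submission
  imports Defs
begin

definition Ag :: "real \<Rightarrow> real \<Rightarrow> real \<Rightarrow> real \<Rightarrow> real" where
  "Ag rL rR rA rB = rL * rA * (rB-rR) - rR * rB * (rA-rL)"
definition Dg :: "real \<Rightarrow> real \<Rightarrow> real \<Rightarrow> real \<Rightarrow> real \<Rightarrow> real \<Rightarrow> real" where
  "Dg rL vL rR vR rA rB = vL * rL * rA * (rB-rR) - vR * rR * rB * (rA-rL)"
definition Bg :: "real \<Rightarrow> real \<Rightarrow> real \<Rightarrow> real \<Rightarrow> real \<Rightarrow> real \<Rightarrow> real \<Rightarrow> real \<Rightarrow> real" where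
  "Bg rL vL pL rR vR pR rA rB = rL * rR * rA * rB * (vL-vR)^2 - (pL-pR) * Ag rL rR rA rB"
definition R0g :: "real \<Rightarrow> real \<Rightarrow> real \<Rightarrow> real \<Rightarrow> real \<Rightarrow> real \<Rightarrow> real \<Rightarrow> real \<Rightarrow> real" where
  "R0g rL vL pL rR vR pR rA rB = (let a = rA - rL; b = rB - rR; t = rA/a; u = rL * rA * b; w = rR * rB * a in
     vL^2 * u + vL^2 * w + 2 * vL * ((t-1) * w * vL - t * vR * w) - t^2 * w * (vL-vR)^2 + t^2 * a * b * (pL-pR))"
definition R1g :: "real \<Rightarrow> real \<Rightarrow> real \<Rightarrow> real \<Rightarrow> real \<Rightarrow> real \<Rightarrow> real \<Rightarrow> real \<Rightarrow> real" where
  "R1g rL vL pL rR vR pR rA rB = (let a = rA - rL; b = rB - rR; u = rL * rA * b; w = rR * rB * a in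
     vL^2 * u - vR^2 * w + a * b * (pL-pR))"
definition R2g :: "real \<Rightarrow> real \<Rightarrow> real \<Rightarrow> real \<Rightarrow> real \<Rightarrow> real \<Rightarrow> real \<Rightarrow> real \<Rightarrow> real" where
  "R2g rL vL pL rR vR pR rA rB = (let a = rA - rL; b = rB - rR; s = rB/b; u = rL * rA * b; w = rR * rB * a in
     -(vR^2 * w + vR^2 * u - 2 * vR * (s * vL * u - (s-1) * u * vR) - s^2 * u * (vL-vR)^2) + s^2 * a * b * (pL-pR))"

lemma id0:
  assumes "rA - rL \<noteq> 0"
  shows "(Dg rL vL rR vR rA rB + rL * rR * rB * (vL-vR))^2 - rA^2 * ((rB-rR)/(rA-rL)) * Bg rL vL pL rR vR pR rA rB
     = Ag rL rR rA rB * R0g rL vL pL rR vR pR rA rB"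
proof -
  define a where "a = rA - rL"
  define t where "t = rA/a"
  have a0: "a \<noteq> 0" using assms a_def by simp
  have h1: "rA = t * a" using a0 by (simp add: t_def)
  have h2: "rL = (t-1) * a" proof - have "rL = rA - a" using a_def by simp also have "... = (t-1) * a" unfolding h1 by (simp add: algebra_simps) finally show ?thesis . qed
  have e1: "rA/(rA-rL) = t" using a_def t_def by simp
  have e2: "rA^2 * ((rB-rR)/(rA-rL)) = t^2 * a * (rB-rR)"
    unfolding a_def[symmetric] using a0 unfolding t_def by (simp add: field_simps power2_eq_square)
  show ?thesis
    unfolding e2 R0g_def Let_def e1 unfolding Ag_def Dg_def Bg_def
    unfolding h1 h2 by (simp add: algebra_simps power2_eq_square)
qed

lemma id1:
  shows "(Dg rL vL rR vR rA rB)^2 - (rA-rL) * (rB-rR) * Bg rL vL pL rR vR pR rA rB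
     = Ag rL rR rA rB * R1g rL vL pL rR vR pR rA rB"
  unfolding R1g_def Let_def Ag_def Dg_def Bg_def by (simp add: algebra_simps power2_eq_square)

lemma id2:
  assumes "rB - rR \<noteq> 0"
  shows "(Dg rL vL rR vR rA rB + rL * rR * rA * (vL-vR))^2 - rB^2 * ((rA-rL)/(rB-rR)) * Bg rL vL pL rR vR pR rA rB
     = Ag rL rR rA rB * R2g rL vL pL rR vR pR rA rB"
proof -
  define b where "b = rB - rR"
  define s where "s = rB/b"
  have b0: "b \<noteq> 0" using assms b_def by simp
  have h1: "rB = s * b" using b0 by (simp add: s_def)
  have h2: "rR = (s-1) * b" proof - have "rR = rB - b" using b_def by simp also have "... = (s-1) * b" unfolding h1 by (simp add: algebra_simps) finally show ?thesis . qed
  have e1: "rB/(rB-rR) = s" using b_def s_def by simp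
  have e2: "rB^2 * ((rA-rL)/(rB-rR)) = s^2 * b * (rA-rL)"
    unfolding b_def[symmetric] using b0 unfolding s_def by (simp add: field_simps power2_eq_square)
  show ?thesis
    unfolding e2 R2g_def Let_def e1 unfolding Ag_def Dg_def Bg_def
    unfolding h1 h2 by (simp add: algebra_simps power2_eq_square)
qed

lemma vals:
  fixes rL rR rML rMR sL sR pM vL vR pL pR :: real
  assumes a0: "rML - rL \<noteq> 0" and b0: "rMR - rR \<noteq> 0"
   and mL: "sL * (rML-rL) = - (rL * vL)" and mR: "sR * (rMR-rR) = - (rR * vR)"
   and pL: "pL = pM - rL * vL^2 + sL * rL * vL" and pR: "pR = pM + sR * rR * vR - rR * vR^2"
  shows "Bg rL vL pL rR vR pR rML rMR = (rML-rL) * (rMR-rR) * (rMR * sR - rML * sL)^2"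
    and "R1g rL vL pL rR vR pR rML rMR = 0"
    and "R0g rL vL pL rR vR pR rML rMR = sL * (Dg rL vL rR vR rML rMR + rL * rR * rMR * (vL-vR) + rML * (rMR-rR) * (rMR * sR - rML * sL))"
    and "R2g rL vL pL rR vR pR rML rMR = sR * (Dg rL vL rR vR rML rMR + rL * rR * rML * (vL-vR) + rMR * (rML-rL) * (rMR * sR - rML * sL))"
proof -
  define a where "a = rML - rL"
  define k where "k = rL/a"
  define b where "b = rMR - rR"
  define m where "m = rR/b"
  have a00: "a \<noteq> 0" using a0 a_def by simp
  have b00: "b \<noteq> 0" using b0 b_def by simp
  have eL: "rL = k * a" using a00 by (simp add: k_def)
  have eML: "rML = (k+1) * a" using a00 a_def by (simp add: k_def algebra_simps)
  have eR: "rR = m * b" using b00 by (simp add: m_def)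
  have eMR: "rMR = (m+1) * b" using b00 b_def by (simp add: m_def algebra_simps)
  have t1: "rML/(rML-rL) = k+1" using a00 a_def by (simp add: k_def field_simps)
  have t2: "rMR/(rMR-rR) = m+1" using b00 b_def by (simp add: m_def field_simps)
  have sL': "sL = -vL * k" using mL a00 unfolding a_def[symmetric] k_def by (simp add: field_simps)
  have sR': "sR = -vR * m" using mR b00 unfolding b_def[symmetric] m_def by (simp add: field_simps)
  note subs = pL pR sL' sR' a_def[symmetric] b_def[symmetric]
  show "Bg rL vL pL rR vR pR rML rMR = (rML-rL) * (rMR-rR) * (rMR * sR - rML * sL)^2"
    unfolding Bg_def Ag_def subs unfolding eL eML eR eMR by (simp add: algebra_simps power2_eq_square)
  show "R1g rL vL pL rR vR pR rML rMR = 0"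
    unfolding R1g_def Let_def subs unfolding eL eML eR eMR by (simp add: algebra_simps power2_eq_square)
  show "R0g rL vL pL rR vR pR rML rMR = sL * (Dg rL vL rR vR rML rMR + rL * rR * rMR * (vL-vR) + rML * (rMR-rR) * (rMR * sR - rML * sL))"
    unfolding R0g_def Dg_def Let_def unfolding t1 unfolding subs unfolding eL eML eR eMR by (simp add: algebra_simps power2_eq_square)
  show "R2g rL vL pL rR vR pR rML rMR = sR * (Dg rL vL rR vR rML rMR + rL * rR * rML * (vL-vR) + rMR * (rML-rL) * (rMR * sR - rML * sL))"
    unfolding R2g_def Dg_def Let_def unfolding t2 unfolding subs unfolding eL eML eR eMR by (simp add: algebra_simps power2_eq_square)
qed

lemma sq_aux:
  fixes a b r X :: real
  assumes "a \<noteq> 0"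
  shows "r^2 * (b/a) * (a * b * X^2) = (r * b * X)^2"
  using assms by (simp add: field_simps power2_eq_square)

lemma sq_aux2:
  fixes a b r X :: real
  assumes "b \<noteq> 0"
  shows "r^2 * (a/b) * (a * b * X^2) = (r * a * X)^2"
  using assms by (simp add: field_simps power2_eq_square)

lemma rat_form:
  fixes P Q A R :: real
  assumes "A \<noteq> 0" "Q \<ge> 0" "P + sqrt Q \<noteq> 0" "P^2 - Q = A * R"
  shows "(P - sqrt Q) / A = R / (P + sqrt Q)"
proof -
  have sq: "sqrt Q * sqrt Q = Q" using assms(2) by simp
  have "(P - sqrt Q) * (P + sqrt Q) = A * R" using assms(4) sq by (simp add: algebra_simps power2_eq_square)
  then show ?thesis using assms(1,3) by (simp add: field_simps)
qed

lemma pos_near: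
  fixes f :: "real \<Rightarrow> real"
  assumes "isCont f 0" "f 0 > 0"
  shows "\<exists>d>0. \<forall>x. x \<noteq> 0 \<and> \<bar>x\<bar> < d \<longrightarrow> f x > 0"
proof -
  have "(f \<longlongrightarrow> f 0) (at 0)" using assms(1) by (simp add: isCont_def)
  then have "eventually (\<lambda>x. f x > 0) (at 0)" using assms(2) by (rule order_tendstoD(1))
  then show ?thesis unfolding eventually_at by (auto simp: dist_real_def)
qed

theorem proposition5p3:
  fixes cv rL vL pL rR vR pR rML rMR vM pM sL sR emax :: real
  assumes cv: "cv > 1/2"
    and data: "rL > 0" "pL > 0" "rR > 0" "pR > 0"
    and shock1: "RH cv sL rL vL pL rML vM pM"
    and shock3: "RH cv sR rMR vM pM rR vR pR"
    and lax1: "vL - sound_speed cv rL pL > sL" "sL > vM - sound_speed cv rML pM"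
    and lax3: "vM + sound_speed cv rMR pM > sR" "sR > vR + sound_speed cv rR pR"
    and dens: "rML > rL" "rMR > rR"
    and pres: "pM > max pL pR"
    and vM0: "vM = 0"
    and emax: "emax > 0"
    and emax_prop: "\<And>e. e \<in> {0<..emax} \<Longrightarrow>
        Afun rL rR rML rMR e \<noteq> 0 \<and>
        Bfun rL vL pL rR vR pR rML rMR e > 0 \<and>
        rMR - e - rR > 0 \<and> rML + e - rL > 0 \<and>
        mu0 rL vL pL rR vR pR rML rMR e < mu1 rL vL pL rR vR pR rML rMR e \<and>
        mu1 rL vL pL rR vR pR rML rMR e < mu2 rL vL pL rR vR pR rML rMR e"
  shows "((\<lambda>(e, d). C1 cv rL vL pL rR vR pR rML rMR pM e d) \<longlongrightarrow> vM^2)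
           (at (0, 0) within ({0<..emax} \<times> {0<..<pM})) \<and>
         ((\<lambda>(e, d). C2 cv rL vL pL rR vR pR rML rMR pM e d) \<longlongrightarrow> vM^2)
           (at (0, 0) within ({0<..emax} \<times> {0<..<pM})) \<and>
         ((\<lambda>(e, d). gamma1 cv rL vL pL rR vR pR rML rMR pM e d) \<longlongrightarrow> - (vM^2 / 2))
           (at (0, 0) within ({0<..emax} \<times> {0<..<pM})) \<and>
         ((\<lambda>(e, d). gamma2 cv rL vL pL rR vR pR rML rMR pM e d) \<longlongrightarrow> - (vM^2 / 2))
           (at (0, 0) within ({0<..emax} \<times> {0<..<pM}))"
proof -
  define S where "S = {0<..emax} \<times> {0<..<pM}"
  define F where "F = at (0::real, 0::real) within S"
  have cvp: "cv > 0" using cv by simp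
  note h1 = shock1[unfolded RH_def energy_def vM0]
  note h3 = shock3[unfolded RH_def energy_def vM0]
  have mL: "sL * (rML - rL) = - (rL * vL)" using h1 by simp
  have momL: "pL = pM - rL * vL^2 + sL * rL * vL" using h1 by (simp add: algebra_simps)
  have enL: "sL * (cv * pM - (rL * vL^2 / 2 + cv * pL)) = - ((rL * vL^2 / 2 + cv * pL + pL) * vL)"
    using h1 by (simp add: algebra_simps)
  have mR: "sR * (rMR - rR) = - (rR * vR)" using h3 by (simp add: algebra_simps)
  have momR: "pR = pM + sR * rR * vR - rR * vR^2" using conjunct1[OF conjunct2[OF h3]] by (simp add: algebra_simps)
  have enR: "sR * ((rR * vR^2 / 2 + cv * pR) - cv * pM) = (rR * vR^2 / 2 + cv * pR + pR) * vR"
    using h3 by (simp add: algebra_simps)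
  have a_pos: "rML - rL > 0" and b_pos: "rMR - rR > 0" using dens by auto
  have rMLp: "rML > 0" and rMRp: "rMR > 0" using dens data by auto
  have cL: "sound_speed cv rL pL \<ge> 0" unfolding sound_speed_def
    by (rule real_sqrt_ge_zero) (use cvp data in simp)
  have cR: "sound_speed cv rR pR \<ge> 0" unfolding sound_speed_def
    by (rule real_sqrt_ge_zero) (use cvp data in simp)
  have vL_gt: "vL > sL" using lax1(1) cL by linarith
  have vR_lt: "vR < sR" using lax3(2) cR by linarith
  have sL_neg: "sL < 0"
  proof (rule ccontr)
    assume "\<not> sL < 0" then have s0: "sL \<ge> 0" by simp
    then have "sL * (rML - rL) \<ge> 0" using a_pos by simp
    then have "rL * vL \<le> 0" using mL by linarith
    then have "vL \<le> 0" using data(1) by (simp add: mult_le_0_iff)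
    then show False using vL_gt s0 by linarith
  qed
  have sR_pos: "sR > 0"
  proof (rule ccontr)
    assume "\<not> sR > 0" then have s0: "sR \<le> 0" by simp
    then have "sR * (rMR - rR) \<le> 0" using b_pos by (simp add: mult_le_0_iff)
    then have "rR * vR \<ge> 0" using mR by linarith
    then have "vR \<ge> 0" using data(3) by (simp add: zero_le_mult_iff)
    then show False using vR_lt s0 by linarith
  qed
  have "sL * (rML - rL) < 0" using sL_neg a_pos by (simp add: mult_neg_pos)
  then have "rL * vL > 0" using mL by linarith
  then have vL_pos: "vL > 0" using data(1) by (simp add: zero_less_mult_iff)
  have "sR * (rMR - rR) > 0" using sR_pos b_pos by simp
  then have "rR * vR < 0" using mR by linarith
  then have vR_neg: "vR < 0" using data(3) by (simp add: mult_less_0_iff)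
  define X where "X = rMR * sR - rML * sL"
  have X_pos: "X > 0"
  proof -
    have "rMR * sR > 0" using rMRp sR_pos by simp
    moreover have "rML * sL < 0" using rMLp sL_neg by (simp add: mult_pos_neg)
    ultimately show ?thesis unfolding X_def by linarith
  qed
  have a_ne: "rML - rL \<noteq> 0" and b_ne: "rMR - rR \<noteq> 0" using dens by auto
  note V = vals[OF a_ne b_ne mL mR momL momR]
  have Dg_pos: "Dg rL vL rR vR rML rMR > 0"
  proof -
    have "vL * rL * rML * (rMR - rR) > 0" using vL_pos data rMLp b_pos by simp
    moreover have "vR * rR * rMR * (rML - rL) < 0" using vR_neg data rMRp a_pos
      by (intro mult_neg_pos) auto
    ultimately show ?thesis unfolding Dg_def by linarith
  qed
  have vdiff: "vL - vR > 0" using vL_pos vR_neg by linarith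

  define P0 where "P0 = (\<lambda>e. Dg rL vL rR vR (rML+e) (rMR-e) + rL * rR * (rMR-e) * (vL-vR))"
  define Q0 where "Q0 = (\<lambda>e. (rML+e)^2 * (((rMR-e)-rR)/((rML+e)-rL)) * Bg rL vL pL rR vR pR (rML+e) (rMR-e))"
  define R0 where "R0 = (\<lambda>e. R0g rL vL pL rR vR pR (rML+e) (rMR-e))"
  define P1 where "P1 = (\<lambda>e. Dg rL vL rR vR (rML+e) (rMR-e))"
  define Q1 where "Q1 = (\<lambda>e. ((rML+e)-rL) * ((rMR-e)-rR) * Bg rL vL pL rR vR pR (rML+e) (rMR-e))"
  define R1 where "R1 = (\<lambda>e. R1g rL vL pL rR vR pR (rML+e) (rMR-e))"
  define P2 where "P2 = (\<lambda>e. Dg rL vL rR vR (rML+e) (rMR-e) + rL * rR * (rML+e) * (vL-vR))"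
  define Q2 where "Q2 = (\<lambda>e. (rMR-e)^2 * (((rML+e)-rL)/((rMR-e)-rR)) * Bg rL vL pL rR vR pR (rML+e) (rMR-e))"
  define R2 where "R2 = (\<lambda>e. R2g rL vL pL rR vR pR (rML+e) (rMR-e))"
  define m0 where "m0 = (\<lambda>e. R0 e / (P0 e + sqrt (Q0 e)))"
  define m1 where "m1 = (\<lambda>e. R1 e / (P1 e + sqrt (Q1 e)))"
  define m2 where "m2 = (\<lambda>e. R2 e / (P2 e + sqrt (Q2 e)))"

  have Ae: "Afun rL rR rML rMR e = Ag rL rR (rML+e) (rMR-e)" for e by (simp add: Afun_def Ag_def)
  have Be: "Bfun rL vL pL rR vR pR rML rMR e = Bg rL vL pL rR vR pR (rML+e) (rMR-e)" for e
    by (simp add: Bfun_def Bg_def Afun_def Ag_def)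
  have mu0e: "mu0 rL vL pL rR vR pR rML rMR e = (P0 e - sqrt (Q0 e)) / Afun rL rR rML rMR e" for e
    unfolding mu0_def P0_def Q0_def Be by (simp add: Dfun_def Dg_def)
  have mu1e: "mu1 rL vL pL rR vR pR rML rMR e = (P1 e - sqrt (Q1 e)) / Afun rL rR rML rMR e" for e
    unfolding mu1_def P1_def Q1_def Be by (simp add: Dfun_def Dg_def)
  have mu2e: "mu2 rL vL pL rR vR pR rML rMR e = (P2 e - sqrt (Q2 e)) / Afun rL rR rML rMR e" for e
    unfolding mu2_def P2_def Q2_def Be by (simp add: Dfun_def Dg_def)
  have id0e: "P0 e ^ 2 - Q0 e = Afun rL rR rML rMR e * R0 e" if "rML + e - rL \<noteq> 0" for e
    using id0[where rA="rML+e" and rB="rMR-e" and rL=rL and rR=rR and vL=vL and vR=vR and pL=pL and pR=pR] that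
    unfolding P0_def Q0_def R0_def Ae by simp
  have id1e: "P1 e ^ 2 - Q1 e = Afun rL rR rML rMR e * R1 e" for e
    using id1[where rA="rML+e" and rB="rMR-e" and rL=rL and rR=rR and vL=vL and vR=vR and pL=pL and pR=pR]
    unfolding P1_def Q1_def R1_def Ae by simp
  have id2e: "P2 e ^ 2 - Q2 e = Afun rL rR rML rMR e * R2 e" if "rMR - e - rR \<noteq> 0" for e
    using id2[where rA="rML+e" and rB="rMR-e" and rL=rL and rR=rR and vL=vL and vR=vR and pL=pL and pR=pR] that
    unfolding P2_def Q2_def R2_def Ae by simp

  have cR0: "isCont R0 0" unfolding R0_def R0g_def Let_def
    by (intro continuous_intros) (use a_pos in auto)
  have cR1: "isCont R1 0" unfolding R1_def R1g_def Let_def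
    by (intro continuous_intros)
  have cR2: "isCont R2 0" unfolding R2_def R2g_def Let_def
    by (intro continuous_intros) (use b_pos in auto)
  have cP0: "isCont P0 0" unfolding P0_def Dg_def by (intro continuous_intros)
  have cP1: "isCont P1 0" unfolding P1_def Dg_def by (intro continuous_intros)
  have cP2: "isCont P2 0" unfolding P2_def Dg_def by (intro continuous_intros)
  have cQ0: "isCont Q0 0" unfolding Q0_def Bg_def Ag_def
    by (intro continuous_intros) (use a_pos in auto)
  have cQ1: "isCont Q1 0" unfolding Q1_def Bg_def Ag_def
    by (intro continuous_intros)
  have cQ2: "isCont Q2 0" unfolding Q2_def Bg_def Ag_def
    by (intro continuous_intros) (use b_pos in auto)
  have cD0: "isCont (\<lambda>e. P0 e + sqrt (Q0 e)) 0" using cP0 cQ0 by (intro continuous_intros)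
  have cD1: "isCont (\<lambda>e. P1 e + sqrt (Q1 e)) 0" using cP1 cQ1 by (intro continuous_intros)
  have cD2: "isCont (\<lambda>e. P2 e + sqrt (Q2 e)) 0" using cP2 cQ2 by (intro continuous_intros)

  have B00: "Bg rL vL pL rR vR pR rML rMR = (rML-rL) * (rMR-rR) * X^2"
    using V(1) a_pos b_pos unfolding X_def by simp
  have Q00: "Q0 0 = (rML * (rMR-rR) * X)^2"
  proof -
    have "Q0 0 = rML^2 * ((rMR-rR)/(rML-rL)) * ((rML-rL) * (rMR-rR) * X^2)" unfolding Q0_def using B00 by simp
    also have "... = (rML * (rMR-rR) * X)^2" by (rule sq_aux[OF a_ne])
    finally show ?thesis .
  qed
  have Q10: "Q1 0 = ((rML-rL) * (rMR-rR) * X)^2"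
  proof -
    have "Q1 0 = (rML-rL) * (rMR-rR) * ((rML-rL) * (rMR-rR) * X^2)" unfolding Q1_def using B00 by simp
    also have "... = ((rML-rL) * (rMR-rR) * X)^2" by (simp add: power2_eq_square algebra_simps)
    finally show ?thesis .
  qed
  have Q20: "Q2 0 = (rMR * (rML-rL) * X)^2"
  proof -
    have "Q2 0 = rMR^2 * ((rML-rL)/(rMR-rR)) * ((rML-rL) * (rMR-rR) * X^2)" unfolding Q2_def using B00 by simp
    also have "... = (rMR * (rML-rL) * X)^2" by (rule sq_aux2[OF b_ne])
    finally show ?thesis .
  qed
  have sQ00: "sqrt (Q0 0) = rML * (rMR-rR) * X" unfolding Q00 real_sqrt_abs
    using rMLp b_pos X_pos by simp
  have sQ10: "sqrt (Q1 0) = (rML-rL) * (rMR-rR) * X" unfolding Q10 real_sqrt_abs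
    using a_pos b_pos X_pos by simp
  have sQ20: "sqrt (Q2 0) = rMR * (rML-rL) * X" unfolding Q20 real_sqrt_abs
    using rMRp a_pos X_pos by simp
  have pp1: "rL * rR * rMR * (vL - vR) > 0" using data rMRp vdiff by simp
  have pp2: "rL * rR * rML * (vL - vR) > 0" using data rMLp vdiff by simp
  have pp3: "rML * (rMR-rR) * X > 0" using rMLp b_pos X_pos by simp
  have pp4: "(rML-rL) * (rMR-rR) * X > 0" using a_pos b_pos X_pos by simp
  have pp5: "rMR * (rML-rL) * X > 0" using rMRp a_pos X_pos by simp
  have den00: "P0 0 + sqrt (Q0 0) > 0" unfolding sQ00 using Dg_pos pp1 pp3 by (simp add: P0_def)
  have den10: "P1 0 + sqrt (Q1 0) > 0" unfolding sQ10 using Dg_pos pp4 by (simp add: P1_def)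
  have den20: "P2 0 + sqrt (Q2 0) > 0" unfolding sQ20 using Dg_pos pp2 pp5 by (simp add: P2_def)
  have m00: "m0 0 = sL"
  proof -
    have "R0 0 = sL * (P0 0 + sqrt (Q0 0))" unfolding sQ00 R0_def P0_def
      using V(3) a_pos b_pos unfolding X_def by simp
    then show ?thesis using den00 unfolding m0_def by simp
  qed
  have m10: "m1 0 = 0"
  proof -
    have "R1 0 = 0" unfolding R1_def using V(2) a_pos b_pos by simp
    then show ?thesis unfolding m1_def by simp
  qed
  have m20: "m2 0 = sR"
  proof -
    have "R2 0 = sR * (P2 0 + sqrt (Q2 0))" unfolding sQ20 R2_def P2_def
      using V(4) a_pos b_pos unfolding X_def by simp
    then show ?thesis using den20 unfolding m2_def by simp
  qed
  have cm0: "isCont m0 0" unfolding m0_def by (rule isCont_divide[OF cR0 cD0]) (use den00 in simp)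
  have cm1: "isCont m1 0" unfolding m1_def by (rule isCont_divide[OF cR1 cD1]) (use den10 in simp)
  have cm2: "isCont m2 0" unfolding m2_def by (rule isCont_divide[OF cR2 cD2]) (use den20 in simp)
  obtain d0 where d0: "d0 > 0" "\<And>x. x \<noteq> 0 \<Longrightarrow> \<bar>x\<bar> < d0 \<Longrightarrow> P0 x + sqrt (Q0 x) > 0"
    using pos_near[OF cD0 den00] by blast
  obtain d1 where d1: "d1 > 0" "\<And>x. x \<noteq> 0 \<Longrightarrow> \<bar>x\<bar> < d1 \<Longrightarrow> P1 x + sqrt (Q1 x) > 0"
    using pos_near[OF cD1 den10] by blast
  obtain d2 where d2: "d2 > 0" "\<And>x. x \<noteq> 0 \<Longrightarrow> \<bar>x\<bar> < d2 \<Longrightarrow> P2 x + sqrt (Q2 x) > 0"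
    using pos_near[OF cD2 den20] by blast
  define d where "d = min d0 (min d1 d2)"
  have dpos: "d > 0" using d0 d1 d2 by (simp add: d_def)
  have mueq: "mu0 rL vL pL rR vR pR rML rMR e = m0 e \<and> mu1 rL vL pL rR vR pR rML rMR e = m1 e
      \<and> mu2 rL vL pL rR vR pR rML rMR e = m2 e"
    if e: "e \<in> {0<..emax}" "\<bar>e\<bar> < d" for e
  proof -
    have ep: "Afun rL rR rML rMR e \<noteq> 0" "Bfun rL vL pL rR vR pR rML rMR e > 0"
      "rMR - e - rR > 0" "rML + e - rL > 0" using emax_prop[OF e(1)] by auto
    have e0: "e \<noteq> 0" using e(1) by simp
    have Bg0: "Bg rL vL pL rR vR pR (rML+e) (rMR-e) \<ge> 0" using ep(2) unfolding Be by simp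
    have q0: "Q0 e \<ge> 0" unfolding Q0_def using Bg0 ep(3,4) by simp
    have q1: "Q1 e \<ge> 0" unfolding Q1_def using Bg0 ep(3,4) by simp
    have q2: "Q2 e \<ge> 0" unfolding Q2_def using Bg0 ep(3,4) by simp
    have g0: "P0 e + sqrt (Q0 e) \<noteq> 0" using d0(2)[OF e0] e(2) unfolding d_def by fastforce
    have g1: "P1 e + sqrt (Q1 e) \<noteq> 0" using d1(2)[OF e0] e(2) unfolding d_def by fastforce
    have g2: "P2 e + sqrt (Q2 e) \<noteq> 0" using d2(2)[OF e0] e(2) unfolding d_def by fastforce
    show ?thesis unfolding mu0e mu1e mu2e m0_def m1_def m2_def
      using rat_form[OF ep(1) q0 g0 id0e] rat_form[OF ep(1) q1 g1 id1e] rat_form[OF ep(1) q2 g2 id2e]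
        ep(3,4) by auto
  qed
  have ev: "eventually (\<lambda>p. fst p \<in> {0<..emax} \<and> \<bar>fst p\<bar> < d) F"
  proof -
    have H: "\<forall>p\<in>S. p \<noteq> (0,0) \<and> dist p (0,0) < d \<longrightarrow> fst p \<in> {0<..emax} \<and> \<bar>fst p\<bar> < d"
    proof (intro ballI impI)
      fix p :: "real \<times> real" assume "p \<in> S" "p \<noteq> (0,0) \<and> dist p (0,0) < d"
      moreover have "dist (fst p) (fst (0::real,0::real)) \<le> dist p (0,0)" by (rule dist_fst_le)
      ultimately show "fst p \<in> {0<..emax} \<and> \<bar>fst p\<bar> < d" unfolding S_def
        by (auto simp: dist_real_def mem_Times_iff)
    qed
    show ?thesis unfolding F_def eventually_at by (rule exI[of _ d]) (rule conjI[OF dpos H])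
  qed
  have ev2: "eventually (\<lambda>p. mu0 rL vL pL rR vR pR rML rMR (fst p) = m0 (fst p)
      \<and> mu1 rL vL pL rR vR pR rML rMR (fst p) = m1 (fst p)
      \<and> mu2 rL vL pL rR vR pR rML rMR (fst p) = m2 (fst p)) F"
  proof (rule eventually_mono[OF ev])
    fix p :: "real \<times> real" assume h: "fst p \<in> {0<..emax} \<and> \<bar>fst p\<bar> < d"
    show "mu0 rL vL pL rR vR pR rML rMR (fst p) = m0 (fst p)
      \<and> mu1 rL vL pL rR vR pR rML rMR (fst p) = m1 (fst p)
      \<and> mu2 rL vL pL rR vR pR rML rMR (fst p) = m2 (fst p)"
      by (rule mueq[OF conjunct1[OF h] conjunct2[OF h]])
  qed
  have fst0: "((\<lambda>p. fst p) \<longlongrightarrow> 0) F"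
    using tendsto_fst[OF tendsto_ident_at[of "(0::real,0::real)" S]] unfolding F_def by simp
  have snd0: "((\<lambda>p. snd p) \<longlongrightarrow> 0) F"
    using tendsto_snd[OF tendsto_ident_at[of "(0::real,0::real)" S]] unfolding F_def by simp
  have tm0: "((\<lambda>p. m0 (fst p)) \<longlongrightarrow> sL) F" using isCont_tendsto_compose[OF cm0 fst0] m00 by simp
  have tm1: "((\<lambda>p. m1 (fst p)) \<longlongrightarrow> 0) F" using isCont_tendsto_compose[OF cm1 fst0] m10 by simp
  have tm2: "((\<lambda>p. m2 (fst p)) \<longlongrightarrow> sR) F" using isCont_tendsto_compose[OF cm2 fst0] m20 by simp

  have limC1: "((\<lambda>p. C1 cv rL vL pL rR vR pR rML rMR pM (fst p) (snd p)) \<longlongrightarrow> 0) F"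
  proof -
    have lim: "((\<lambda>p. 2 / ((rML + fst p) * (m0 (fst p) - m1 (fst p))) *
       (- m0 (fst p) * (cv * (pM - snd p - pL) - rL * vL^2 / 2) + m1 (fst p) * (cv + 1) * (pM - snd p)
        - (rL * vL^2 / 2 + (cv + 1) * pL) * vL)) \<longlongrightarrow>
        2 / ((rML + 0) * (sL - 0)) *
       (- sL * (cv * (pM - 0 - pL) - rL * vL^2 / 2) + 0 * (cv + 1) * (pM - 0)
        - (rL * vL^2 / 2 + (cv + 1) * pL) * vL)) F"
      by (intro tendsto_intros tm0 tm1 fst0 snd0) (use sL_neg rMLp in auto)
    have val: "- sL * (cv * (pM - 0 - pL) - rL * vL^2 / 2) + 0 * (cv + 1) * (pM - 0)
        - (rL * vL^2 / 2 + (cv + 1) * pL) * vL = 0" using enL by (simp add: algebra_simps)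
    have ev3: "eventually (\<lambda>p. 2 / ((rML + fst p) * (m0 (fst p) - m1 (fst p))) *
       (- m0 (fst p) * (cv * (pM - snd p - pL) - rL * vL^2 / 2) + m1 (fst p) * (cv + 1) * (pM - snd p)
        - (rL * vL^2 / 2 + (cv + 1) * pL) * vL) = C1 cv rL vL pL rR vR pR rML rMR pM (fst p) (snd p)) F"
      using ev2 by (rule eventually_mono) (simp add: C1_def Let_def)
    show ?thesis using tendsto_cong[OF ev3] lim unfolding val by simp
  qed
  have limC2: "((\<lambda>p. C2 cv rL vL pL rR vR pR rML rMR pM (fst p) (snd p)) \<longlongrightarrow> 0) F"
  proof -
    have lim: "((\<lambda>p. 2 / ((rMR - fst p) * (m2 (fst p) - m1 (fst p))) *
       (- m2 (fst p) * (cv * (pM - snd p - pR) - rR * vR^2 / 2) + m1 (fst p) * (cv + 1) * (pM - snd p)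
        - (rR * vR^2 / 2 + (cv + 1) * pR) * vR)) \<longlongrightarrow>
        2 / ((rMR - 0) * (sR - 0)) *
       (- sR * (cv * (pM - 0 - pR) - rR * vR^2 / 2) + 0 * (cv + 1) * (pM - 0)
        - (rR * vR^2 / 2 + (cv + 1) * pR) * vR)) F"
      by (intro tendsto_intros tm2 tm1 fst0 snd0) (use sR_pos rMRp in auto)
    have val: "- sR * (cv * (pM - 0 - pR) - rR * vR^2 / 2) + 0 * (cv + 1) * (pM - 0)
        - (rR * vR^2 / 2 + (cv + 1) * pR) * vR = 0" using enR by (simp add: algebra_simps)
    have ev3: "eventually (\<lambda>p. 2 / ((rMR - fst p) * (m2 (fst p) - m1 (fst p))) *
       (- m2 (fst p) * (cv * (pM - snd p - pR) - rR * vR^2 / 2) + m1 (fst p) * (cv + 1) * (pM - snd p)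
        - (rR * vR^2 / 2 + (cv + 1) * pR) * vR) = C2 cv rL vL pL rR vR pR rML rMR pM (fst p) (snd p)) F"
      using ev2 by (rule eventually_mono) (simp add: C2_def Let_def)
    show ?thesis using tendsto_cong[OF ev3] lim unfolding val by simp
  qed
  have limG1: "((\<lambda>p. gamma1 cv rL vL pL rR vR pR rML rMR pM (fst p) (snd p)) \<longlongrightarrow> 0) F"
  proof -
    have lim: "((\<lambda>p. ((rML + fst p) * C1 cv rL vL pL rR vR pR rML rMR pM (fst p) (snd p) / 2
        - rL * vL^2 + pM - snd p - pL - m0 (fst p) * ((rML + fst p) * m1 (fst p) - rL * vL)) / (rML + fst p))
       \<longlongrightarrow> ((rML + 0) * 0 / 2 - rL * vL^2 + pM - 0 - pL - sL * ((rML + 0) * 0 - rL * vL)) / (rML + 0)) F"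
      by (intro tendsto_intros tm0 tm1 fst0 snd0 limC1) (use rMLp in auto)
    have val: "((rML + 0) * 0 / 2 - rL * vL^2 + pM - 0 - pL - sL * ((rML + 0) * 0 - rL * vL)) / (rML + 0) = 0"
      using momL by (simp add: algebra_simps)
    have ev3: "eventually (\<lambda>p. ((rML + fst p) * C1 cv rL vL pL rR vR pR rML rMR pM (fst p) (snd p) / 2
        - rL * vL^2 + pM - snd p - pL - m0 (fst p) * ((rML + fst p) * m1 (fst p) - rL * vL)) / (rML + fst p)
        = gamma1 cv rL vL pL rR vR pR rML rMR pM (fst p) (snd p)) F"
      using ev2 by (rule eventually_mono) (simp add: gamma1_def Let_def)
    show ?thesis using tendsto_cong[OF ev3] lim unfolding val by simp
  qed
  have limG2: "((\<lambda>p. gamma2 cv rL vL pL rR vR pR rML rMR pM (fst p) (snd p)) \<longlongrightarrow> 0) F"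
  proof -
    have lim: "((\<lambda>p. ((rMR - fst p) * C2 cv rL vL pL rR vR pR rML rMR pM (fst p) (snd p) / 2
        - rR * vR^2 + pM - snd p - pR - m2 (fst p) * ((rMR - fst p) * m1 (fst p) - rR * vR)) / (rMR - fst p))
       \<longlongrightarrow> ((rMR - 0) * 0 / 2 - rR * vR^2 + pM - 0 - pR - sR * ((rMR - 0) * 0 - rR * vR)) / (rMR - 0)) F"
      by (intro tendsto_intros tm2 tm1 fst0 snd0 limC2) (use rMRp in auto)
    have val: "((rMR - 0) * 0 / 2 - rR * vR^2 + pM - 0 - pR - sR * ((rMR - 0) * 0 - rR * vR)) / (rMR - 0) = 0"
      using momR by (simp add: algebra_simps)
    have ev3: "eventually (\<lambda>p. ((rMR - fst p) * C2 cv rL vL pL rR vR pR rML rMR pM (fst p) (snd p) / 2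
        - rR * vR^2 + pM - snd p - pR - m2 (fst p) * ((rMR - fst p) * m1 (fst p) - rR * vR)) / (rMR - fst p)
        = gamma2 cv rL vL pL rR vR pR rML rMR pM (fst p) (snd p)) F"
      using ev2 by (rule eventually_mono) (simp add: gamma2_def Let_def)
    show ?thesis using tendsto_cong[OF ev3] lim unfolding val by simp
  qed
  show ?thesis unfolding case_prod_beta' vM0 using limC1 limC2 limG1 limG2 unfolding F_def S_def by simp
qed

end
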